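(* Let $M$ be the group von Neumann algebra of the right-angled Artin group with generators $u_1,v_1,v_2,v_3,u_2$ whose only relations are $[u_1,v_1]=[v_1,v_2]=[v_2,v_3]=[v_3,u_2]=1$, with generators identified with the canonical Haar unitaries in $M$, and let $\mathcal U$ be a free ultrafilter on $\mathbb N$. If $w\in\{u_1\}'\cap\mathcal H(M^{\mathcal U})$, then $E_{(\{v_2\}'')^{\mathcal U}}(w)=0$.
   Context: $M$ carries its canonical trace $\tau$; $M^{\mathcal U}$ is the tracial ultrapower containing $M$ diagonally, and $(\{v_2\}'')^{\mathcal U}\subset M^{\mathcal U}$ is the ultrapower of the von Neumann subalgebra generated by $v_2$. $E_B$ denotes the trace-preserving conditional expectation onto a von Neumann subalgebra $B$. A unitary is Haar if $\tau(u^n)=0$ for all $n\ge1$; $\mathcal H(M^{\mathcal U})$ is the set of Haar unitaries of $M^{\mathcal U}$; $\{u_1\}'$ is the commutant of $u_1$ in $M^{\mathcal U}$. *)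

theory Defs
  imports "HOL-Analysis.Analysis"
begin

datatype gen = U1 | V1 | V2 | V3 | U2

definition gadj :: "gen \<Rightarrow> gen \<Rightarrow> bool" where
  "gadj a b \<longleftrightarrow> {a, b} \<in> {{U1, V1}, {V1, V2}, {V2, V3}, {V3, U2}}"

lemma gadj_sym: "gadj a b \<Longrightarrow> gadj b a"
  unfolding gadj_def by (simp add: insert_commute)

text \<open>A letter (s, True) stands for s, (s, False) for its inverse.\<close>
type_synonym letter = "gen \<times> bool"

inductive rstep :: "letter list \<Rightarrow> letter list \<Rightarrow> bool" where
  cancel: "rstep (xs @ (a, e) # (a, \<not> e) # ys) (xs @ ys)"
| swap: "gadj a b \<Longrightarrow> rstep (xs @ (a, e) # (b, f) # ys) (xs @ (b, f) # (a, e) # ys)"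

definition req :: "letter list \<Rightarrow> letter list \<Rightarrow> bool" where
  "req = equivclp rstep"

quotient_type raag = "letter list" / req
  unfolding req_def by simp

lemma equivclp_map:
  assumes "equivclp r x y" and "\<And>a b. r a b \<Longrightarrow> equivclp r (f a) (f b)"
  shows "equivclp r (f x) (f y)"
  using assms(1)
proof (induction rule: equivclp_induct)
  case base then show ?case by simp
next
  case (step y z)
  then show ?case
    by (metis assms(2) equivclp_sym equivclp_trans)
qed

lemma rstep_append_left: "rstep a b \<Longrightarrow> rstep (zs @ a) (zs @ b)"
proof (induction rule: rstep.induct)
  case (cancel xs a e ys)
  then show ?case using rstep.cancel[of "zs @ xs"] by simp
next
  case (swap a b xs e f ys)
  then show ?case using rstep.swap[of a b "zs @ xs"] by simp
qed

lemma rstep_append_right: "rstep a b \<Longrightarrow> rstep (a @ zs) (b @ zs)"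
proof (induction rule: rstep.induct)
  case (cancel xs a e ys)
  then show ?case using rstep.cancel[of xs a e "ys @ zs"] by simp
next
  case (swap a b xs e f ys)
  then show ?case using rstep.swap[of a b xs e f "ys @ zs"] by simp
qed

definition winv :: "letter list \<Rightarrow> letter list" where
  "winv w = rev (map (\<lambda>(a, e). (a, \<not> e)) w)"

lemma rstep_winv: "rstep a b \<Longrightarrow> rstep (winv a) (winv b)"
proof (induction rule: rstep.induct)
  case (cancel xs a e ys)
  then show ?case
    using rstep.cancel[of "winv ys" a e "winv xs"] by (simp add: winv_def)
next
  case (swap a b xs e f ys)
  then show ?case
    using rstep.swap[of b a "winv ys" "\<not> f" "\<not> e" "winv xs"]
    by (simp add: winv_def gadj_sym)
qed

lift_definition rmult :: "raag \<Rightarrow> raag \<Rightarrow> raag" is "(@)"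
proof -
  fix a b c d assume "req a b" "req c d"
  have "equivclp rstep (a @ c) (b @ c)"
    using \<open>req a b\<close> unfolding req_def
    by (rule equivclp_map[where f = "\<lambda>x. x @ c"]) (auto intro: rstep_append_right)
  moreover have "equivclp rstep (b @ c) (b @ d)"
    using \<open>req c d\<close> unfolding req_def
    by (rule equivclp_map[where f = "\<lambda>x. b @ x"]) (auto intro: rstep_append_left)
  ultimately show "req (a @ c) (b @ d)" unfolding req_def by (rule equivclp_trans)
qed

lift_definition rinv :: "raag \<Rightarrow> raag" is winv
  unfolding req_def
  by (rule equivclp_map) (auto intro: rstep_winv)

lift_definition rone :: raag is "[]" .

lift_definition rgen :: "gen \<Rightarrow> raag" is "\<lambda>a. [(a, True)]" .

type_synonym vec = "raag \<Rightarrow> complex"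
type_synonym op = "vec \<Rightarrow> vec"

definition l2 :: "vec set" where
  "l2 = {f. (\<lambda>g. (cmod (f g))\<^sup>2) summable_on UNIV}"

definition l2inner :: "vec \<Rightarrow> vec \<Rightarrow> complex" where
  "l2inner f h = (\<Sum>\<^sub>\<infinity>g. cnj (f g) * h g)"

definition l2norm :: "vec \<Rightarrow> real" where
  "l2norm f = sqrt (\<Sum>\<^sub>\<infinity>g. (cmod (f g))\<^sup>2)"

text \<open>Bounded linear operators on l2(G); to make operators extensional they are
  required to vanish outside l2(G).\<close>
definition bop :: "op set" where
  "bop = {T. (\<forall>f\<in>l2. T f \<in> l2)
           \<and> (\<forall>f\<in>l2. \<forall>h\<in>l2. \<forall>c. T (\<lambda>x. f x + c * h x) = (\<lambda>x. T f x + c * T h x))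
           \<and> (\<exists>C. \<forall>f\<in>l2. l2norm (T f) \<le> C * l2norm f)
           \<and> (\<forall>f. f \<notin> l2 \<longrightarrow> T f = (\<lambda>_. 0))}"

definition commutant :: "op set \<Rightarrow> op set" where
  "commutant S = {T \<in> bop. \<forall>A\<in>S. \<forall>f\<in>l2. T (A f) = A (T f)}"

definition adjoint :: "op \<Rightarrow> op" where
  "adjoint T = (THE S. S \<in> bop \<and> (\<forall>f\<in>l2. \<forall>h\<in>l2. l2inner (S f) h = l2inner f (T h)))"

definition lambda_op :: "raag \<Rightarrow> op" where
  "lambda_op g = (\<lambda>f. if f \<in> l2 then (\<lambda>h. f (rmult (rinv g) h)) else (\<lambda>_. 0))"

definition one_op :: op where "one_op = lambda_op rone"

definition zero_op :: op where "zero_op = (\<lambda>f _. 0)"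

definition LG :: "op set" where
  "LG = commutant (commutant (range lambda_op))"

definition vN_v2 :: "op set" where
  "vN_v2 = commutant (commutant {lambda_op (rgen V2)})"

definition delta_e :: vec where
  "delta_e = (\<lambda>g. if g = rone then 1 else 0)"

definition tau :: "op \<Rightarrow> complex" where
  "tau x = l2inner delta_e (x delta_e)"

definition condexp :: "op set \<Rightarrow> op \<Rightarrow> op" where
  "condexp B x = (THE y. y \<in> B \<and> (\<forall>b\<in>B. tau (y \<circ> b) = tau (x \<circ> b)))"

definition free_ultrafilter :: "nat filter \<Rightarrow> bool" where
  "free_ultrafilter U \<longleftrightarrow> U \<noteq> bot
     \<and> (\<forall>P. eventually P U \<or> eventually (\<lambda>n. \<not> P n) U)
     \<and> (\<forall>n. eventually (\<lambda>m. m \<noteq> n) U)"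

text \<open>Representing sequences of elements of the ultrapower B^U: uniformly bounded
  sequences in B.\<close>
definition in_ultrapower :: "op set \<Rightarrow> (nat \<Rightarrow> op) \<Rightarrow> bool" where
  "in_ultrapower B X \<longleftrightarrow> (\<forall>n. X n \<in> B)
     \<and> (\<exists>C. \<forall>n. \<forall>f\<in>l2. l2norm (X n f) \<le> C * l2norm f)"

text \<open>Equality in M^U: the 2-norm ||x_n - y_n||_2 = ||(x_n - y_n) delta_e|| tends to 0 along U.\<close>
definition ueq :: "nat filter \<Rightarrow> (nat \<Rightarrow> op) \<Rightarrow> (nat \<Rightarrow> op) \<Rightarrow> bool" where
  "ueq U X Y \<longleftrightarrow> ((\<lambda>n. l2norm (\<lambda>g. X n delta_e g - Y n delta_e g)) \<longlongrightarrow> 0) U"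

definition haar_unitary_U :: "nat filter \<Rightarrow> (nat \<Rightarrow> op) \<Rightarrow> bool" where
  "haar_unitary_U U W \<longleftrightarrow> in_ultrapower LG W
     \<and> ueq U (\<lambda>n. adjoint (W n) \<circ> W n) (\<lambda>n. one_op)
     \<and> ueq U (\<lambda>n. W n \<circ> adjoint (W n)) (\<lambda>n. one_op)
     \<and> (\<forall>k::nat. k \<ge> 1 \<longrightarrow> ((\<lambda>n. tau (W n ^^ k)) \<longlongrightarrow> 0) U)"

end

theory Submission
  imports Defs
begin


lemma req_refl[simp]: "req x x" unfolding req_def by simp

lemma winv_append_self: "req (winv w @ w) []"
proof (induction w)
  case Nil then show ?case by (simp add: winv_def)
next
  case (Cons l w)
  obtain a e where l: "l = (a, e)" by (cases l)
  have "winv (l # w) @ l # w = winv w @ (a, \<not> e) # (a, \<not>\<not> e) # w"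
    by (simp add: winv_def l)
  moreover have "rstep (winv w @ (a, \<not> e) # (a, \<not>\<not> e) # w) (winv w @ w)"
    by (rule rstep.cancel)
  ultimately have "req (winv (l # w) @ l # w) (winv w @ w)"
    unfolding req_def by (metis r_into_equivclp)
  with Cons show ?case unfolding req_def by (metis equivclp_trans)
qed

lemma winv_winv[simp]: "winv (winv w) = w"
  by (simp add: winv_def rev_map comp_def case_prod_beta)

instantiation raag :: group_add
begin
definition "plus_raag = rmult"
definition "zero_raag = rone"
definition "uminus_raag = rinv"
definition "minus_raag a b = rmult a (rinv b)"
instance
proof
  fix a b c :: raag
  show "a + b + c = a + (b + c)" unfolding plus_raag_def
    by transfer simp
  show "0 + a = a" unfolding plus_raag_def zero_raag_def by transfer simp
  show "a + 0 = a" unfolding plus_raag_def zero_raag_def by transfer simp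
  show "- a + a = 0" unfolding plus_raag_def zero_raag_def uminus_raag_def
    by transfer (rule winv_append_self)
  show "a + - b = a - b" by (simp add: plus_raag_def minus_raag_def uminus_raag_def)
qed
end


lift_definition zp :: "int \<Rightarrow> raag" is
  "\<lambda>n. if n \<ge> 0 then replicate (nat n) (V2, True) else replicate (nat (- n)) (V2, False)" .

definition gv :: raag where "gv = rgen V2"
definition gu :: raag where "gu = rgen U1"

lemma zp_0[simp]: "zp 0 = 0"
  unfolding zero_raag_def by transfer simp

lemma zp_1: "zp 1 = gv"
  unfolding gv_def by transfer simp

lemma uminus_gv: "- gv = abs_raag [(V2, False)]"
  unfolding gv_def uminus_raag_def by transfer (simp add: winv_def)

lemma gv_zp: "gv + zp n = zp (n + 1)"
  unfolding gv_def plus_raag_def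
proof transfer
  fix n :: int
  show "req ([(V2, True)] @ (if n \<ge> 0 then replicate (nat n) (V2, True) else replicate (nat (- n)) (V2, False)))
     (if n + 1 \<ge> 0 then replicate (nat (n + 1)) (V2, True) else replicate (nat (- (n + 1))) (V2, False))"
  proof (cases "n \<ge> 0")
    case True
    then have "nat (n + 1) = Suc (nat n)" by simp
    with True show ?thesis by simp
  next
    case False
    define k where "k = nat (- (n + 1))"
    have k: "nat (- n) = Suc k" "nat (- (n + 1)) = k" using False by (simp_all add: k_def)
    have "rstep ([] @ (V2, True) # (V2, \<not> True) # replicate k (V2, False)) ([] @ replicate k (V2, False))"
      by (rule rstep.cancel)
    then have "req ([(V2, True)] @ replicate (Suc k) (V2, False)) (replicate k (V2, False))"
      unfolding req_def by (simp add: r_into_equivclp)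
    moreover have "(if n + 1 \<ge> 0 then replicate (nat (n + 1)) (V2, True) else replicate (nat (- (n + 1))) (V2, False)) = replicate k (V2, False)"
      using k False by (cases k) auto
    moreover have "[(V2, True)] @ (if n \<ge> 0 then replicate (nat n) (V2, True) else replicate (nat (- n)) (V2, False))
       = [(V2, True)] @ replicate (Suc k) (V2, False)" using False k by simp
    ultimately show ?thesis by simp
  qed
qed

lemma ngv_zp: "- gv + zp n = zp (n - 1)"
  unfolding uminus_gv plus_raag_def
proof transfer
  fix n :: int
  show "req ([(V2, False)] @ (if n \<ge> 0 then replicate (nat n) (V2, True) else replicate (nat (- n)) (V2, False)))
     (if n - 1 \<ge> 0 then replicate (nat (n - 1)) (V2, True) else replicate (nat (- (n - 1))) (V2, False))"
  proof (cases "n > 0")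
    case False
    then have "nat (- (n - 1)) = Suc (nat (- n))" by simp
    with False show ?thesis by auto
  next
    case True
    define k where "k = nat (n - 1)"
    have k: "nat n = Suc k" "nat (n - 1) = k" using True by (simp_all add: k_def)
    have "rstep ([] @ (V2, False) # (V2, \<not> False) # replicate k (V2, True)) ([] @ replicate k (V2, True))"
      by (rule rstep.cancel)
    then have "req ([(V2, False)] @ replicate (Suc k) (V2, True)) (replicate k (V2, True))"
      unfolding req_def by (simp add: r_into_equivclp)
    then show ?thesis using True k by simp
  qed
qed

lemma zp_add: "zp (m + n) = zp m + zp n"
proof (induction m rule: int_induct[where k = 0])
  case base then show ?case by simp
next
  case (step1 i)
  have "zp (i + 1 + n) = gv + zp (i + n)" using gv_zp[of "i + n"] by (simp add: algebra_simps)
  also have "\<dots> = gv + zp i + zp n" using step1 by (simp add: add.assoc)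
  also have "\<dots> = zp (i + 1) + zp n" using gv_zp[of i] by simp
  finally show ?case .
next
  case (step2 i)
  have "zp (i - 1 + n) = - gv + zp (i + n)" using ngv_zp[of "i + n"] by (simp add: algebra_simps)
  also have "\<dots> = - gv + zp i + zp n" using step2 by (simp add: add.assoc)
  also have "\<dots> = zp (i - 1) + zp n" using ngv_zp[of i] by simp
  finally show ?case .
qed

lemma zp_uminus: "zp (- n) = - zp n"
  using zp_add[of "-n" n] by (simp add: eq_neg_iff_add_eq_0)

lemma zp_diff: "zp (m - n) = zp m - zp n"
  using zp_add[of m "-n"] zp_uminus by simp

section \<open>A matrix representation\<close>

type_synonym m2 = "int \<times> int \<times> int \<times> int"

fun mm :: "m2 \<Rightarrow> m2 \<Rightarrow> m2" where
  "mm (a, b, c, d) (e, f, g, h) = (a*e+b*g, a*f+b*h, c*e+d*g, c*f+d*h)"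

definition mI :: m2 where "mI = (1, 0, 0, 1)"

lemma mm_assoc: "mm (mm x y) z = mm x (mm y z)"
  by (cases x; cases y; cases z) (simp add: algebra_simps)

lemma mm_I[simp]: "mm mI x = x" "mm x mI = x"
  by (cases x; simp add: mI_def)+

fun lm :: "letter \<Rightarrow> m2" where
  "lm (U1, e) = (if e then (1, 2, 0, 1) else (1, -2, 0, 1))"
| "lm (V2, e) = (if e then (1, 0, 2, 1) else (1, 0, -2, 1))"
| "lm (_, e) = mI"

fun weval :: "letter list \<Rightarrow> m2" where
  "weval [] = mI"
| "weval (l # w) = mm (lm l) (weval w)"

lemma weval_append: "weval (xs @ ys) = mm (weval xs) (weval ys)"
  by (induction xs) (simp_all add: mm_assoc)

lemma lm_cancel: "mm (lm (a, e)) (lm (a, \<not> e)) = mI"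
  by (cases a; cases e; simp add: mI_def)

lemma lm_swap: "gadj a b \<Longrightarrow> mm (lm (a, e)) (lm (b, f)) = mm (lm (b, f)) (lm (a, e))"
  by (cases a; cases b; simp add: gadj_def doubleton_eq_iff)

lemma weval_rstep: "rstep x y \<Longrightarrow> weval x = weval y"
proof (induction rule: rstep.induct)
  case (cancel xs a e ys)
  then show ?case by (simp add: weval_append mm_assoc[symmetric] lm_cancel)
next
  case (swap a b xs e f ys)
  have "mm (lm (a, e)) (mm (lm (b, f)) z) = mm (lm (b, f)) (mm (lm (a, e)) z)" for z
    by (metis mm_assoc lm_swap[OF swap])
  then show ?case by (simp add: weval_append)
qed

lemma weval_req: "req x y \<Longrightarrow> weval x = weval y"
  unfolding req_def
  by (induction rule: equivclp_induct) (auto dest: weval_rstep)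

lift_definition phi :: "raag \<Rightarrow> m2" is weval by (rule weval_req)

lemma phi_add: "phi (a + b) = mm (phi a) (phi b)"
  unfolding plus_raag_def by transfer (rule weval_append)

lemma phi_0: "phi 0 = mI"
  unfolding zero_raag_def by transfer simp

lemma phi_gu: "phi gu = (1, 2, 0, 1)"
  unfolding gu_def by transfer (simp add: mI_def)

lemma phi_ngu: "phi (- gu) = (1, -2, 0, 1)"
  unfolding gu_def uminus_raag_def by transfer (simp add: mI_def winv_def)

lemma phi_gv: "phi gv = (1, 0, 2, 1)" unfolding gv_def by transfer (simp add: mI_def)
lemma phi_ngv: "phi (- gv) = (1, 0, -2, 1)" unfolding uminus_gv by transfer (simp add: mI_def)

lemma phi_zp: "phi (zp n) = (1, 0, 2 * n, 1)"
proof (induction n rule: int_induct[where k = 0])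
  case base then show ?case by (simp add: phi_0 mI_def)
next
  case (step1 i)
  have "phi (zp (i + 1)) = mm (phi gv) (phi (zp i))" by (simp only: gv_zp[symmetric] phi_add)
  then show ?case using step1 by (simp add: phi_gv ring_distribs)
next
  case (step2 i)
  have "phi (zp (i - 1)) = mm (phi (- gv)) (phi (zp i))" by (simp only: ngv_zp[symmetric] phi_add)
  then show ?case using step2 by (simp add: phi_ngv ring_distribs)
qed

lemma zp_inj: "zp m = zp n \<longleftrightarrow> m = n"
proof
  assume "zp m = zp n"
  then have "phi (zp m) = phi (zp n)" by simp
  then show "m = n" by (simp add: phi_zp)
qed simp

lemma zp_eq_0_iff[simp]: "zp n = 0 \<longleftrightarrow> n = 0"
  using zp_inj[of n 0] by simp

definition cj :: "raag \<Rightarrow> raag" where "cj g = gu + g + - gu"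

lemma phi_cj: "phi (cj x) = mm (mm (1, 2, 0, 1) (phi x)) (1, -2, 0, 1)"
  by (simp only: cj_def phi_add phi_gu phi_ngu)

lemma phi_cj_pow: "phi ((cj ^^ d) g) = mm (mm (1, 2 * int d, 0, 1) (phi g)) (1, - 2 * int d, 0, 1)"
proof (induction d)
  case 0 then show ?case by (simp add: mI_def[symmetric])
next
  case (Suc d)
  obtain a b c e where pg: "phi g = (a, b, c, e)" by (cases "phi g")
  have "phi ((cj ^^ Suc d) g) = mm (mm (1, 2, 0, 1) (phi ((cj ^^ d) g))) (1, -2, 0, 1)"
    by (simp add: phi_cj)
  then show ?case using Suc by (simp add: pg algebra_simps)
qed

lemma cj_pow_zp_not_H:
  assumes "d > 0" "n \<noteq> 0"
  shows "(cj ^^ d) (zp n) \<noteq> zp m"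
proof
  assume "(cj ^^ d) (zp n) = zp m"
  then have "phi ((cj ^^ d) (zp n)) = phi (zp m)" by simp
  then show False using assms by (auto simp: phi_cj_pow phi_zp algebra_simps)
qed

lemma cj_bij: "bij cj"
proof (rule bij_betw_byWitness[where f' = "\<lambda>g. - gu + g + gu"])
  show "\<forall>a\<in>UNIV. - gu + cj a + gu = a" by (simp add: cj_def add.assoc)
  show "\<forall>a'\<in>UNIV. cj (- gu + a' + gu) = a'" by (simp add: cj_def add.assoc)
qed auto

lemma cj_pow_inj: "inj (cj ^^ m)"
  using bij_is_inj[OF bij_betw_funpow[OF cj_bij]] .

lemma cj_disjoint:
  assumes "m < m'" "n \<noteq> 0" "n' \<noteq> 0"
  shows "(cj ^^ m) (zp n) \<noteq> (cj ^^ m') (zp n')"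
proof
  assume "(cj ^^ m) (zp n) = (cj ^^ m') (zp n')"
  then have "(cj ^^ m) (zp n) = (cj ^^ m) ((cj ^^ (m' - m)) (zp n'))"
    using assms by (metis funpow_add le_add_diff_inverse less_imp_le comp_apply)
  then have "zp n = (cj ^^ (m' - m)) (zp n')" using cj_pow_inj by (meson injD)
  then show False using cj_pow_zp_not_H[of "m' - m" n' n] assms by simp
qed


definition nsq :: "vec \<Rightarrow> real" where
  "nsq f = (\<Sum>\<^sub>\<infinity>g. (cmod (f g))\<^sup>2)"

lemma l2norm_nsq: "l2norm f = sqrt (nsq f)"
  unfolding l2norm_def nsq_def ..

lemma nsq_nonneg: "nsq f \<ge> 0"
  unfolding nsq_def by (simp add: infsum_nonneg)

lemma l2norm_nonneg: "l2norm f \<ge> 0"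
  by (simp add: l2norm_nsq nsq_nonneg)

lemma l2norm_sq: "(l2norm f)\<^sup>2 = nsq f"
  by (simp add: l2norm_nsq nsq_nonneg)

lemma l2_fin_le: "f \<in> l2 \<Longrightarrow> finite F \<Longrightarrow> (\<Sum>g\<in>F. (cmod (f g))\<^sup>2) \<le> nsq f"
  unfolding l2_def nsq_def by (intro finite_sum_le_infsum) auto

lemma l2_I:
  assumes "\<And>F. finite F \<Longrightarrow> (\<Sum>g\<in>F. (cmod (f g))\<^sup>2) \<le> B"
  shows "f \<in> l2" "nsq f \<le> B"
proof -
  have s: "(\<lambda>g. (cmod (f g))\<^sup>2) summable_on UNIV"
    by (rule nonneg_bdd_above_summable_on) (use assms in \<open>auto simp: bdd_above_def\<close>)
  then show "f \<in> l2" unfolding l2_def by simp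
  show "nsq f \<le> B" unfolding nsq_def by (rule infsum_le_finite_sums[OF s]) (use assms in auto)
qed

lemma l2_fin_L2: "f \<in> l2 \<Longrightarrow> finite F \<Longrightarrow> L2_set (\<lambda>g. cmod (f g)) F \<le> l2norm f"
  unfolding L2_set_def l2norm_nsq using l2_fin_le by simp

lemma l2_I_L2:
  assumes "\<And>F. finite F \<Longrightarrow> L2_set (\<lambda>g. cmod (f g)) F \<le> B" "B \<ge> 0"
  shows "f \<in> l2" "l2norm f \<le> B"
proof -
  have "(\<Sum>g\<in>F. (cmod (f g))\<^sup>2) \<le> B\<^sup>2" if "finite F" for F
  proof -
    have "sqrt (\<Sum>g\<in>F. (cmod (f g))\<^sup>2) \<le> B" using assms(1)[OF that] unfolding L2_set_def .
    moreover have "0 \<le> (\<Sum>g\<in>F. (cmod (f g))\<^sup>2)" by (simp add: sum_nonneg)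
    ultimately have "(sqrt (\<Sum>g\<in>F. (cmod (f g))\<^sup>2))\<^sup>2 \<le> B\<^sup>2"
      by (intro power_mono) auto
    then show ?thesis using \<open>0 \<le> (\<Sum>g\<in>F. (cmod (f g))\<^sup>2)\<close> by simp
  qed
  from l2_I[OF this] show "f \<in> l2" "l2norm f \<le> B"
    using assms(2) by (auto simp: l2norm_nsq real_sqrt_le_iff intro: real_le_lsqrt)
qed

lemma l2_dom:
  assumes "f \<in> l2" "\<And>g. cmod (h g) \<le> c * cmod (f g)" "c \<ge> 0"
  shows "h \<in> l2" "l2norm h \<le> c * l2norm f"
proof -
  have "L2_set (\<lambda>g. cmod (h g)) F \<le> c * l2norm f" if "finite F" for F
  proof -
    have "L2_set (\<lambda>g. cmod (h g)) F \<le> L2_set (\<lambda>g. c * cmod (f g)) F"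
      by (rule L2_set_mono) (use assms in auto)
    also have "\<dots> = c * L2_set (\<lambda>g. cmod (f g)) F"
      using assms(3) by (simp add: L2_set_right_distrib)
    also have "\<dots> \<le> c * l2norm f" using l2_fin_L2[OF assms(1) that] assms(3) by (simp add: mult_left_mono)
    finally show ?thesis .
  qed
  then show "h \<in> l2" "l2norm h \<le> c * l2norm f"
    using l2_I_L2[of h "c * l2norm f"] assms(3) l2norm_nonneg[of f] by auto
qed

lemma l2_add:
  assumes "f \<in> l2" "h \<in> l2"
  shows "(\<lambda>x. f x + h x) \<in> l2" "l2norm (\<lambda>x. f x + h x) \<le> l2norm f + l2norm h"
proof -
  have "L2_set (\<lambda>g. cmod (f g + h g)) F \<le> l2norm f + l2norm h" if "finite F" for F
  proof -
    have "L2_set (\<lambda>g. cmod (f g + h g)) F \<le> L2_set (\<lambda>g. cmod (f g) + cmod (h g)) F"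
      by (rule L2_set_mono) (auto intro: norm_triangle_ineq)
    also have "\<dots> \<le> L2_set (\<lambda>g. cmod (f g)) F + L2_set (\<lambda>g. cmod (h g)) F"
      by (rule L2_set_triangle_ineq)
    also have "\<dots> \<le> l2norm f + l2norm h"
      using l2_fin_L2[OF assms(1) that] l2_fin_L2[OF assms(2) that] by simp
    finally show ?thesis .
  qed
  then show "(\<lambda>x. f x + h x) \<in> l2" "l2norm (\<lambda>x. f x + h x) \<le> l2norm f + l2norm h"
    using l2_I_L2[of "\<lambda>x. f x + h x" "l2norm f + l2norm h"] l2norm_nonneg[of f] l2norm_nonneg[of h]
    by auto
qed

lemma l2_scale:
  assumes "f \<in> l2"
  shows "(\<lambda>x. c * f x) \<in> l2" "l2norm (\<lambda>x. c * f x) \<le> cmod c * l2norm f"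
  using l2_dom[OF assms, of "\<lambda>x. c * f x" "cmod c"] by (auto simp: norm_mult)

lemma l2_uminus: "f \<in> l2 \<Longrightarrow> (\<lambda>x. - f x) \<in> l2"
  using l2_scale(1)[of f "-1"] by simp

lemma l2norm_uminus: "l2norm (\<lambda>x. - f x) = l2norm f"
  unfolding l2norm_def by simp

lemma l2_diff:
  assumes "f \<in> l2" "h \<in> l2"
  shows "(\<lambda>x. f x - h x) \<in> l2" "l2norm (\<lambda>x. f x - h x) \<le> l2norm f + l2norm h"
  using l2_add[OF assms(1) l2_uminus[OF assms(2)]] l2norm_uminus[of h] by auto

lemma l2_zero[simp]: "(\<lambda>_. 0) \<in> l2"
  unfolding l2_def by simp

lemma l2norm_zero[simp]: "l2norm (\<lambda>_. 0) = 0"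
  unfolding l2norm_def by simp

lemma l2_pointwise: "f \<in> l2 \<Longrightarrow> cmod (f g) \<le> l2norm f"
  using l2_fin_L2[of f "{g}"] by (simp add: L2_set_def)

lemma l2norm_eq_0: "f \<in> l2 \<Longrightarrow> l2norm f = 0 \<Longrightarrow> f = (\<lambda>_. 0)"
  using l2_pointwise by (metis norm_le_zero_iff ext)

lemma l2_triangle:
  assumes "f \<in> l2" "h \<in> l2" "k \<in> l2"
  shows "l2norm (\<lambda>x. f x - k x) \<le> l2norm (\<lambda>x. f x - h x) + l2norm (\<lambda>x. h x - k x)"
  using l2_add(2)[OF l2_diff(1)[OF assms(1,2)] l2_diff(1)[OF assms(2,3)]] by simp

lemma l2_restrict:
  assumes "f \<in> l2"
  shows "(\<lambda>x. if x \<in> A then f x else 0) \<in> l2" "l2norm (\<lambda>x. if x \<in> A then f x else 0) \<le> l2norm f"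
  using l2_dom[OF assms, of "\<lambda>x. if x \<in> A then f x else 0" 1] by auto

lemma l2_reindex:
  assumes "bij p"
  shows "(f \<circ> p \<in> l2) = (f \<in> l2)" "nsq (f \<circ> p) = nsq f" "l2norm (f \<circ> p) = l2norm f"
proof -
  have b: "bij_betw p UNIV UNIV" using assms by (simp add: bij_def bij_betw_def)
  show "(f \<circ> p \<in> l2) = (f \<in> l2)"
    unfolding l2_def using summable_on_reindex_bij_betw[OF b, of "\<lambda>g. (cmod (f g))\<^sup>2"] by (simp add: comp_def)
  show "nsq (f \<circ> p) = nsq f"
    unfolding nsq_def using infsum_reindex_bij_betw[OF b, of "\<lambda>g. (cmod (f g))\<^sup>2"] by (simp add: comp_def)
  then show "l2norm (f \<circ> p) = l2norm f" by (simp add: l2norm_nsq)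
qed

definition dlt :: "raag \<Rightarrow> vec" where
  "dlt j = (\<lambda>h. if h = j then 1 else 0)"

lemma finite_support_l2:
  assumes "finite S" "\<And>x. x \<notin> S \<Longrightarrow> f x = 0"
  shows "f \<in> l2"
proof -
  have "(\<lambda>g. (cmod (f g))\<^sup>2) summable_on S" using assms(1) by simp
  then have "(\<lambda>g. (cmod (f g))\<^sup>2) summable_on UNIV"
    by (rule summable_on_cong_neutral[THEN iffD1, rotated -1]) (use assms in auto)
  then show ?thesis by (simp add: l2_def)
qed


lemma dlt_l2[simp]: "dlt j \<in> l2"
  by (rule finite_support_l2[of "{j}"]) (auto simp: dlt_def)

lemma nsq_dlt: "nsq (dlt j) = 1"
proof -
  have "nsq (dlt j) = infsum (\<lambda>g. (cmod (dlt j g))\<^sup>2) {j}"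
    unfolding nsq_def by (rule infsum_cong_neutral) (auto simp: dlt_def)
  then show ?thesis by (simp add: dlt_def)
qed

lemma l2norm_dlt[simp]: "l2norm (dlt j) = 1"
  by (simp add: l2norm_nsq nsq_dlt)

lemma l2_tail:
  assumes "f \<in> l2" "e > 0"
  shows "\<exists>X. finite X \<and> (\<forall>Y. finite Y \<and> X \<subseteq> Y \<longrightarrow> nsq (\<lambda>x. if x \<in> Y then 0 else f x) < e)"
proof -
  define p where "p = (\<lambda>g. (cmod (f g))\<^sup>2)"
  have sp: "p summable_on UNIV" using assms(1) unfolding l2_def p_def by simp
  have nf: "nsq f = infsum p UNIV" by (simp add: nsq_def p_def)
  have hs: "(p has_sum nsq f) UNIV" unfolding nf using sp by simp
  then have "(sum p \<longlongrightarrow> nsq f) (finite_subsets_at_top UNIV)" unfolding has_sum_def .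
  then have "eventually (\<lambda>Y. dist (sum p Y) (nsq f) < e) (finite_subsets_at_top UNIV)"
    using assms(2) by (rule tendstoD)
  then obtain X where X: "finite X" "\<And>Y. finite Y \<Longrightarrow> X \<subseteq> Y \<Longrightarrow> dist (sum p Y) (nsq f) < e"
    unfolding eventually_finite_subsets_at_top by auto
  have "nsq (\<lambda>x. if x \<in> Y then 0 else f x) < e" if "finite Y" "X \<subseteq> Y" for Y
  proof -
    have "nsq (\<lambda>x. if x \<in> Y then 0 else f x) = infsum p (UNIV - Y)"
      unfolding nsq_def by (rule infsum_cong_neutral) (auto simp: p_def)
    also have "\<dots> = infsum p UNIV - infsum p Y"
      by (rule infsum_Diff) (use sp that in auto)
    also have "\<dots> = nsq f - sum p Y" using that(1) by (simp add: nsq_def p_def)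
    finally show ?thesis using X(2)[OF that] by (simp add: dist_real_def)
  qed
  with X(1) show ?thesis by blast
qed

section \<open>Bounded operators\<close>

lemma bop_l2: "T \<in> bop \<Longrightarrow> f \<in> l2 \<Longrightarrow> T f \<in> l2"
  unfolding bop_def by blast

lemma bop_lin: "T \<in> bop \<Longrightarrow> f \<in> l2 \<Longrightarrow> h \<in> l2 \<Longrightarrow> T (\<lambda>x. f x + c * h x) = (\<lambda>x. T f x + c * T h x)"
  unfolding bop_def by blast

lemma bop_out: "T \<in> bop \<Longrightarrow> f \<notin> l2 \<Longrightarrow> T f = (\<lambda>_. 0)"
  unfolding bop_def by blast

lemma bop_bound:
  assumes "T \<in> bop"
  obtains C where "C > 0" "\<And>f. f \<in> l2 \<Longrightarrow> l2norm (T f) \<le> C * l2norm f"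
proof -
  obtain C where C: "\<And>f. f \<in> l2 \<Longrightarrow> l2norm (T f) \<le> C * l2norm f"
    using assms unfolding bop_def by blast
  have "l2norm (T f) \<le> (max C 0 + 1) * l2norm f" if "f \<in> l2" for f
  proof -
    have "C * l2norm f \<le> (max C 0 + 1) * l2norm f"
      by (rule mult_right_mono) (auto simp: l2norm_nonneg)
    then show ?thesis using C[OF that] by linarith
  qed
  moreover have "max C 0 + 1 > 0" by simp
  ultimately show ?thesis using that by blast
qed

lemma bop_0: "T \<in> bop \<Longrightarrow> T (\<lambda>_. 0) = (\<lambda>_. 0)"
  using bop_lin[of T "\<lambda>_. 0" "\<lambda>_. 0" 1] by (simp add: fun_eq_iff)

lemma bop_scale: "T \<in> bop \<Longrightarrow> h \<in> l2 \<Longrightarrow> T (\<lambda>x. c * h x) = (\<lambda>x. c * T h x)"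
  using bop_lin[of T "\<lambda>_. 0" h c] bop_0[of T] by simp

lemma bop_add: "T \<in> bop \<Longrightarrow> f \<in> l2 \<Longrightarrow> h \<in> l2 \<Longrightarrow> T (\<lambda>x. f x + h x) = (\<lambda>x. T f x + T h x)"
  using bop_lin[of T f h 1] by simp

lemma bop_diff: "T \<in> bop \<Longrightarrow> f \<in> l2 \<Longrightarrow> h \<in> l2 \<Longrightarrow> T (\<lambda>x. f x - h x) = (\<lambda>x. T f x - T h x)"
  using bop_lin[of T f h "-1"] by simp

lemma l2_sum: "finite F \<Longrightarrow> (\<And>j. j \<in> F \<Longrightarrow> v j \<in> l2) \<Longrightarrow> (\<lambda>x. \<Sum>j\<in>F. v j x) \<in> l2"
proof (induction F rule: finite_induct)
  case empty then show ?case by simp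
next
  case (insert a F)
  then show ?case using l2_add(1)[of "v a" "\<lambda>x. \<Sum>j\<in>F. v j x"] by simp
qed

lemma bop_sum:
  assumes T: "T \<in> bop"
  shows "finite F \<Longrightarrow> (\<And>j. j \<in> F \<Longrightarrow> v j \<in> l2) \<Longrightarrow>
   T (\<lambda>x. \<Sum>j\<in>F. v j x) = (\<lambda>x. \<Sum>j\<in>F. T (v j) x)"
proof (induction F rule: finite_induct)
  case empty then show ?case by (simp add: bop_0[OF T])
next
  case (insert a F)
  have "T (\<lambda>x. \<Sum>j\<in>insert a F. v j x) = T (\<lambda>x. v a x + (\<Sum>j\<in>F. v j x))"
    using insert by simp
  also have "\<dots> = (\<lambda>x. T (v a) x + T (\<lambda>x. \<Sum>j\<in>F. v j x) x)"
    by (rule bop_add[OF T]) (use insert l2_sum in auto)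
  finally show ?case using insert by simp
qed

lemma restrict_as_sum:
  "finite Y \<Longrightarrow> (\<lambda>x. \<Sum>j\<in>Y. f j * dlt j x) = (\<lambda>x. if x \<in> Y then f x else 0)"
  by (auto simp: dlt_def fun_eq_iff if_distrib cong: if_cong)

lemma bop_expand:
  assumes T: "T \<in> bop" and f: "f \<in> l2"
  shows "((\<lambda>j. f j * T (dlt j) h) has_sum T f h) UNIV"
  unfolding has_sum_def
proof (rule tendstoI)
  fix e :: real assume e: "e > 0"
  obtain C where C: "C > 0" "\<And>f. f \<in> l2 \<Longrightarrow> l2norm (T f) \<le> C * l2norm f"
    using bop_bound[OF T] by blast
  have "(e / C)\<^sup>2 > 0" using e C by simp
  from l2_tail[OF f this] obtain X where X: "finite X"
    "\<And>Y. finite Y \<Longrightarrow> X \<subseteq> Y \<Longrightarrow> nsq (\<lambda>x. if x \<in> Y then 0 else f x) < (e / C)\<^sup>2" by blast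
  show "eventually (\<lambda>Y. dist (\<Sum>j\<in>Y. f j * T (dlt j) h) (T f h) < e) (finite_subsets_at_top UNIV)"
    unfolding eventually_finite_subsets_at_top
  proof (intro exI conjI allI impI)
    show "finite X" "X \<subseteq> UNIV" using X by auto
    fix Y assume Y: "finite Y \<and> X \<subseteq> Y \<and> Y \<subseteq> UNIV"
    define fY where "fY = (\<lambda>x. if x \<in> Y then f x else 0)"
    define gY where "gY = (\<lambda>x. if x \<in> Y then 0 else f x)"
    have fYl2: "fY \<in> l2" unfolding fY_def by (rule l2_restrict(1)[OF f])
    have gYl2: "gY \<in> l2" using l2_dom(1)[OF f, of gY 1] unfolding gY_def by auto
    have s1: "T (\<lambda>x. \<Sum>j\<in>Y. f j * dlt j x) = (\<lambda>x. \<Sum>j\<in>Y. T (\<lambda>x. f j * dlt j x) x)"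
      by (rule bop_sum[OF T]) (use Y l2_scale(1)[OF dlt_l2] in auto)
    have s2: "T (\<lambda>x. f j * dlt j x) = (\<lambda>x. f j * T (dlt j) x)" for j
      by (rule bop_scale[OF T dlt_l2])
    have "(\<Sum>j\<in>Y. f j * T (dlt j) h) = T (\<lambda>x. \<Sum>j\<in>Y. f j * dlt j x) h"
      unfolding s1 s2 ..
    also have "\<dots> = T fY h" using Y by (simp add: restrict_as_sum fY_def)
    finally have eq: "(\<Sum>j\<in>Y. f j * T (dlt j) h) = T fY h" .
    have fgY: "f = (\<lambda>x. fY x + gY x)" unfolding fY_def gY_def by (rule ext) simp
    have "T f = (\<lambda>x. T fY x + T gY x)" using bop_add[OF T fYl2 gYl2] fgY by simp
    then have "dist (\<Sum>j\<in>Y. f j * T (dlt j) h) (T f h) = cmod (T gY h)"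
      by (simp add: eq dist_norm)
    also have "\<dots> \<le> l2norm (T gY)" by (rule l2_pointwise[OF bop_l2[OF T gYl2]])
    also have "\<dots> \<le> C * l2norm gY" by (rule C(2)[OF gYl2])
    also have "\<dots> < C * (e / C)"
    proof -
      have "nsq gY < (e / C)\<^sup>2" using X(2) Y unfolding gY_def by blast
      then have "sqrt (nsq gY) < sqrt ((e / C)\<^sup>2)" by (simp only: real_sqrt_less_iff)
      moreover have "sqrt ((e / C)\<^sup>2) = e / C" using e C by simp
      ultimately have "sqrt (nsq gY) < e / C" by simp
      then show ?thesis using C(1) unfolding l2norm_nsq by (intro mult_strict_left_mono)
    qed
    also have "\<dots> = e" using C(1) by simp
    finally show "dist (\<Sum>j\<in>Y. f j * T (dlt j) h) (T f h) < e" .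
  qed
qed

lemma bop_ext:
  assumes "S \<in> bop" "T \<in> bop" "\<And>j. S (dlt j) = T (dlt j)"
  shows "S = T"
proof
  fix f
  show "S f = T f"
  proof (cases "f \<in> l2")
    case True
    show ?thesis
    proof
      fix h
      have "((\<lambda>j. f j * S (dlt j) h) has_sum S f h) UNIV" by (rule bop_expand[OF assms(1) True])
      moreover have "((\<lambda>j. f j * S (dlt j) h) has_sum T f h) UNIV"
        using bop_expand[OF assms(2) True, of h] assms(3) by simp
      ultimately show "S f h = T f h" by (rule has_sum_unique)
    qed
  next
    case False
    then show ?thesis using bop_out[OF assms(1) False] bop_out[OF assms(2) False] by simp
  qed
qed

lemma bop_comp:
  assumes "S \<in> bop" "T \<in> bop"
  shows "S \<circ> T \<in> bop"
proof -
  obtain C1 where C1: "C1 > 0" "\<And>f. f \<in> l2 \<Longrightarrow> l2norm (S f) \<le> C1 * l2norm f"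
    using bop_bound[OF assms(1)] by blast
  obtain C2 where C2: "C2 > 0" "\<And>f. f \<in> l2 \<Longrightarrow> l2norm (T f) \<le> C2 * l2norm f"
    using bop_bound[OF assms(2)] by blast
  have "l2norm (S (T f)) \<le> (C1 * C2) * l2norm f" if "f \<in> l2" for f
  proof -
    have "l2norm (S (T f)) \<le> C1 * l2norm (T f)" using C1(2) bop_l2[OF assms(2) that] by blast
    also have "\<dots> \<le> C1 * (C2 * l2norm f)" using C2(2)[OF that] C1(1) by (simp add: mult_left_mono)
    finally show ?thesis by (simp add: mult.assoc)
  qed
  moreover have "\<forall>f\<in>l2. S (T f) \<in> l2" using assms bop_l2 by blast
  moreover have "\<forall>f\<in>l2. \<forall>h\<in>l2. \<forall>c. S (T (\<lambda>x. f x + c * h x)) = (\<lambda>x. S (T f) x + c * S (T h) x)"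
  proof (intro ballI allI)
    fix f h c assume "f \<in> l2" "h \<in> l2"
    then show "S (T (\<lambda>x. f x + c * h x)) = (\<lambda>x. S (T f) x + c * S (T h) x)"
      using bop_lin[OF assms(2)] bop_lin[OF assms(1)] bop_l2[OF assms(2)] by simp
  qed
  moreover have "\<forall>f. f \<notin> l2 \<longrightarrow> S (T f) = (\<lambda>_. 0)"
    using bop_out[OF assms(2)] bop_0[OF assms(1)] by simp
  ultimately show ?thesis unfolding bop_def comp_def by blast
qed


definition Hs :: "raag set" where "Hs = range zp"

lemma Hs_0[simp]: "0 \<in> Hs" unfolding Hs_def using zp_0 by (metis rangeI)
lemma Hs_add: "a \<in> Hs \<Longrightarrow> b \<in> Hs \<Longrightarrow> a + b \<in> Hs"
  unfolding Hs_def by (auto simp: zp_add[symmetric])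
lemma Hs_uminus: "a \<in> Hs \<Longrightarrow> - a \<in> Hs"
  unfolding Hs_def by (auto simp: zp_uminus[symmetric])
lemma Hs_gv: "gv \<in> Hs" unfolding Hs_def using zp_1 by (metis rangeI)
lemma Hs_zp[simp]: "zp n \<in> Hs" unfolding Hs_def by simp

lemma Hs_shift: "(- gv + h \<in> Hs) = (h \<in> Hs)"
proof
  assume "- gv + h \<in> Hs"
  then have "gv + (- gv + h) \<in> Hs" using Hs_add Hs_gv by blast
  then show "h \<in> Hs" by (simp add: add.assoc[symmetric])
next
  assume "h \<in> Hs" then show "- gv + h \<in> Hs" using Hs_add Hs_uminus Hs_gv by blast
qed

lemma lambda_op_eq: "lambda_op g f = (if f \<in> l2 then (\<lambda>h. f (- g + h)) else (\<lambda>_. 0))"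
  unfolding lambda_op_def plus_raag_def uminus_raag_def ..

definition perm_op :: "(raag \<Rightarrow> raag) \<Rightarrow> op" where
  "perm_op p f = (if f \<in> l2 then f \<circ> p else (\<lambda>_. 0))"

lemma perm_op_bop:
  assumes p: "bij p"
  shows "perm_op p \<in> bop"
proof -
  have a: "\<forall>f\<in>l2. perm_op p f \<in> l2" using l2_reindex(1)[OF p] by (simp add: perm_op_def)
  have b: "\<forall>f\<in>l2. \<forall>h\<in>l2. \<forall>c. perm_op p (\<lambda>x. f x + c * h x) = (\<lambda>x. perm_op p f x + c * perm_op p h x)"
  proof (intro ballI allI)
    fix f h c assume "f \<in> l2" "h \<in> l2"
    then have "(\<lambda>x. f x + c * h x) \<in> l2" using l2_add(1) l2_scale(1) by blast
    then show "perm_op p (\<lambda>x. f x + c * h x) = (\<lambda>x. perm_op p f x + c * perm_op p h x)"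
      using \<open>f \<in> l2\<close> \<open>h \<in> l2\<close> by (simp add: perm_op_def comp_def)
  qed
  have c: "\<exists>C. \<forall>f\<in>l2. l2norm (perm_op p f) \<le> C * l2norm f"
    using l2_reindex(3)[OF p] by (intro exI[of _ 1]) (simp add: perm_op_def)
  have d: "\<forall>f. f \<notin> l2 \<longrightarrow> perm_op p f = (\<lambda>_. 0)" by (simp add: perm_op_def)
  show ?thesis unfolding bop_def using a b c d by blast
qed

lemma bij_left: "bij (\<lambda>h::raag. g + h)"
  by (rule bij_betw_byWitness[where f' = "\<lambda>h. - g + h"]) (auto simp: add.assoc[symmetric])

lemma bij_right: "bij (\<lambda>h::raag. h + g)"
  by (rule bij_betw_byWitness[where f' = "\<lambda>h. h + - g"]) (auto simp: add.assoc)

lemma lambda_perm: "lambda_op g = perm_op (\<lambda>h. - g + h)"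
  by (rule ext) (simp add: lambda_op_eq perm_op_def comp_def)

lemma lambda_bop: "lambda_op g \<in> bop"
  unfolding lambda_perm by (rule perm_op_bop[OF bij_left])

definition rho :: "raag \<Rightarrow> op" where "rho g = perm_op (\<lambda>h. h + g)"

lemma rho_bop: "rho g \<in> bop"
  unfolding rho_def by (rule perm_op_bop[OF bij_right])

lemma rho_eq: "f \<in> l2 \<Longrightarrow> rho g f = (\<lambda>h. f (h + g))"
  by (simp add: rho_def perm_op_def comp_def)

lemma lambda_eq: "f \<in> l2 \<Longrightarrow> lambda_op g f = (\<lambda>h. f (- g + h))"
  by (simp add: lambda_op_eq)

definition mH :: op where
  "mH f = (if f \<in> l2 then (\<lambda>h. if h \<in> Hs then f h else 0) else (\<lambda>_. 0))"

lemma mH_bop: "mH \<in> bop"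
proof -
  have a: "\<forall>f\<in>l2. mH f \<in> l2" using l2_restrict(1) by (simp add: mH_def)
  have b: "\<forall>f\<in>l2. \<forall>h\<in>l2. \<forall>c. mH (\<lambda>x. f x + c * h x) = (\<lambda>x. mH f x + c * mH h x)"
  proof (intro ballI allI)
    fix f h c assume "f \<in> l2" "h \<in> l2"
    then have "(\<lambda>x. f x + c * h x) \<in> l2" using l2_add(1) l2_scale(1) by blast
    then show "mH (\<lambda>x. f x + c * h x) = (\<lambda>x. mH f x + c * mH h x)"
      using \<open>f \<in> l2\<close> \<open>h \<in> l2\<close> by (simp add: mH_def fun_eq_iff)
  qed
  have c: "\<exists>C. \<forall>f\<in>l2. l2norm (mH f) \<le> C * l2norm f"
    using l2_restrict(2) by (intro exI[of _ 1]) (simp add: mH_def)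
  have d: "\<forall>f. f \<notin> l2 \<longrightarrow> mH f = (\<lambda>_. 0)" by (simp add: mH_def)
  show ?thesis unfolding bop_def using a b c d by blast
qed

lemma lam_add: "lambda_op (a + b) = lambda_op a \<circ> lambda_op b"
proof
  fix f
  show "lambda_op (a + b) f = (lambda_op a \<circ> lambda_op b) f"
  proof (cases "f \<in> l2")
    case True
    then have "lambda_op b f \<in> l2" using bop_l2[OF lambda_bop] by blast
    then show ?thesis using True by (simp del: add_uminus_conv_diff add: lambda_eq minus_add add.assoc)
  next
    case False
    then show ?thesis by (simp add: lambda_op_eq)
  qed
qed

lemma lam_comp: "lambda_op a (lambda_op b f) = lambda_op (a + b) f"
  using lam_add[of a b] by simp

lemma lam_0: "f \<in> l2 \<Longrightarrow> lambda_op 0 f = f"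
  by (simp add: lambda_eq)

lemma rho_lam_comm: "f \<in> l2 \<Longrightarrow> rho g (lambda_op k f) = lambda_op k (rho g f)"
  using bop_l2[OF lambda_bop] bop_l2[OF rho_bop] by (simp add: rho_eq lambda_eq add.assoc)

lemma rho_in_comm: "rho g \<in> commutant (range lambda_op)"
  unfolding commutant_def using rho_bop rho_lam_comm by blast

lemma rho_in_comm_v2: "rho g \<in> commutant {lambda_op gv}"
  unfolding commutant_def using rho_bop rho_lam_comm by blast

lemma mH_in_comm_v2: "mH \<in> commutant {lambda_op gv}"
proof -
  have "mH (lambda_op gv f) = lambda_op gv (mH f)" if "f \<in> l2" for f
  proof -
    have "lambda_op gv f \<in> l2" "mH f \<in> l2" using that bop_l2[OF lambda_bop] bop_l2[OF mH_bop] by blast+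
    then show ?thesis using that by (simp add: mH_def lambda_eq Hs_shift fun_eq_iff)
  qed
  then show ?thesis unfolding commutant_def using mH_bop by blast
qed

lemma LG_bop: "x \<in> LG \<Longrightarrow> x \<in> bop"
  unfolding LG_def commutant_def by blast

lemma LG_rho: "x \<in> LG \<Longrightarrow> f \<in> l2 \<Longrightarrow> x (rho g f) = rho g (x f)"
  unfolding LG_def using rho_in_comm[of g] by (simp add: commutant_def)

lemma vN_bop: "b \<in> vN_v2 \<Longrightarrow> b \<in> bop"
  unfolding vN_v2_def commutant_def by blast

lemma vN_comm: "b \<in> vN_v2 \<Longrightarrow> T \<in> commutant {lambda_op gv} \<Longrightarrow> f \<in> l2 \<Longrightarrow> b (T f) = T (b f)"
  unfolding vN_v2_def gv_def commutant_def by blast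

lemma vN_rho: "b \<in> vN_v2 \<Longrightarrow> f \<in> l2 \<Longrightarrow> b (rho g f) = rho g (b f)"
  using vN_comm rho_in_comm_v2 by blast

lemma vN_mH: "b \<in> vN_v2 \<Longrightarrow> f \<in> l2 \<Longrightarrow> b (mH f) = mH (b f)"
  using vN_comm mH_in_comm_v2 by blast

lemma comm_v2_ngv:
  assumes T: "T \<in> commutant {lambda_op gv}" and f: "f \<in> l2"
  shows "T (lambda_op (- gv) f) = lambda_op (- gv) (T f)"
proof -
  have Tb: "T \<in> bop" and Tc: "\<And>f. f \<in> l2 \<Longrightarrow> T (lambda_op gv f) = lambda_op gv (T f)"
    using T unfolding commutant_def by auto
  define f' where "f' = lambda_op (- gv) f"
  have f'l2: "f' \<in> l2" unfolding f'_def using bop_l2[OF lambda_bop f] .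
  have ff: "lambda_op gv f' = f" unfolding f'_def using f by (simp add: lam_comp lam_0)
  have "T f = lambda_op gv (T f')" using Tc[OF f'l2] ff by simp
  then have "lambda_op (- gv) (T f) = lambda_op (- gv) (lambda_op gv (T f'))" by simp
  also have "\<dots> = T f'" using bop_l2[OF Tb f'l2] by (simp add: lam_comp lam_0)
  finally show ?thesis unfolding f'_def by simp
qed

lemma comm_v2_H:
  assumes T: "T \<in> commutant {lambda_op gv}"
  shows "f \<in> l2 \<Longrightarrow> T (lambda_op (zp n) f) = lambda_op (zp n) (T f)"
proof (induction n arbitrary: f rule: int_induct[where k = 0])
  case base
  have Tb: "T \<in> bop" using T unfolding commutant_def by auto
  show ?case using base bop_l2[OF Tb base] by (simp add: lambda_eq)
next
  case (step1 i)
  have Tb: "T \<in> bop" and Tc: "\<And>f. f \<in> l2 \<Longrightarrow> T (lambda_op gv f) = lambda_op gv (T f)"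
    using T unfolding commutant_def by auto
  have "lambda_op (zp (i + 1)) = lambda_op gv \<circ> lambda_op (zp i)"
    using lam_add[of gv "zp i"] gv_zp[of i] by simp
  then have e: "lambda_op (zp (i + 1)) f = lambda_op gv (lambda_op (zp i) f)" for f by simp
  have "T (lambda_op (zp (i + 1)) f) = T (lambda_op gv (lambda_op (zp i) f))" by (simp only: e)
  also have "\<dots> = lambda_op gv (T (lambda_op (zp i) f))" by (rule Tc[OF bop_l2[OF lambda_bop step1.prems]])
  also have "\<dots> = lambda_op gv (lambda_op (zp i) (T f))" by (simp only: step1.IH[OF step1.prems])
  finally show ?case by (simp only: e)
next
  case (step2 i)
  have "lambda_op (zp (i - 1)) = lambda_op (- gv) \<circ> lambda_op (zp i)"
    using lam_add[of "- gv" "zp i"] ngv_zp[of i] by simp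
  then have e: "lambda_op (zp (i - 1)) f = lambda_op (- gv) (lambda_op (zp i) f)" for f by simp
  have "T (lambda_op (zp (i - 1)) f) = T (lambda_op (- gv) (lambda_op (zp i) f))" by (simp only: e)
  also have "\<dots> = lambda_op (- gv) (T (lambda_op (zp i) f))"
    by (rule comm_v2_ngv[OF T bop_l2[OF lambda_bop step2.prems]])
  also have "\<dots> = lambda_op (- gv) (lambda_op (zp i) (T f))" by (simp only: step2.IH[OF step2.prems])
  finally show ?case by (simp only: e)
qed

lemma lam_H_vN: "lambda_op (zp n) \<in> vN_v2"
  unfolding vN_v2_def gv_def[symmetric]
proof -
  have "\<forall>T\<in>commutant {lambda_op gv}. \<forall>f\<in>l2. lambda_op (zp n) (T f) = T (lambda_op (zp n) f)"
  proof (intro ballI)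
    fix T f assume "T \<in> commutant {lambda_op gv}" "f \<in> l2"
    then show "lambda_op (zp n) (T f) = T (lambda_op (zp n) f)" using comm_v2_H by simp
  qed
  then show "lambda_op (zp n) \<in> commutant (commutant {lambda_op gv})"
    unfolding commutant_def[of "commutant {lambda_op gv}"] using lambda_bop by blast
qed

lemma delta_e_dlt: "delta_e = dlt 0"
  unfolding delta_e_def dlt_def zero_raag_def ..

lemma neg_add_eq_0: "(- j + h = (0::raag)) = (h = j)"
proof
  assume "- j + h = 0"
  then have "j + (- j + h) = j" by simp
  then show "h = j" by (simp add: add.assoc[symmetric])
qed simp

lemma dlt_rho: "dlt j = rho (- j) (dlt 0)"
  unfolding rho_eq[OF dlt_l2] by (simp add: dlt_def fun_eq_iff)

lemma dlt_lam: "dlt j = lambda_op j (dlt 0)"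
  unfolding lambda_eq[OF dlt_l2] by (simp add: dlt_def fun_eq_iff neg_add_eq_0)

lemma tau_eq: "tau x = x (dlt 0) 0"
proof -
  have "tau x = infsum (\<lambda>g. cnj (dlt 0 g) * x (dlt 0) g) UNIV"
    unfolding tau_def l2inner_def delta_e_dlt ..
  also have "\<dots> = infsum (\<lambda>g. cnj (dlt 0 g) * x (dlt 0) g) {0}"
    by (rule infsum_cong_neutral) (auto simp: dlt_def)
  finally show ?thesis by (simp add: dlt_def)
qed

lemma LG_dlt:
  assumes x: "x \<in> LG" shows "x (dlt j) h = x (dlt 0) (h + - j)"
proof -
  have "x (dlt j) = x (rho (- j) (dlt 0))" by (subst dlt_rho[of j]) (rule refl)
  also have "\<dots> = rho (- j) (x (dlt 0))" by (rule LG_rho[OF x dlt_l2])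
  also have "\<dots> = (\<lambda>h. x (dlt 0) (h + - j))" by (rule rho_eq[OF bop_l2[OF LG_bop[OF x] dlt_l2]])
  finally show ?thesis by simp
qed

lemma vN_dlt:
  assumes x: "x \<in> vN_v2" shows "x (dlt j) h = x (dlt 0) (h + - j)"
proof -
  have "x (dlt j) = x (rho (- j) (dlt 0))" by (subst dlt_rho[of j]) (rule refl)
  also have "\<dots> = rho (- j) (x (dlt 0))" by (rule vN_rho[OF x dlt_l2])
  also have "\<dots> = (\<lambda>h. x (dlt 0) (h + - j))" by (rule rho_eq[OF bop_l2[OF vN_bop[OF x] dlt_l2]])
  finally show ?thesis by simp
qed

lemma vN_supp: "b \<in> vN_v2 \<Longrightarrow> h \<notin> Hs \<Longrightarrow> b (dlt 0) h = 0"
proof -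
  assume b: "b \<in> vN_v2" and h: "h \<notin> Hs"
  define v where "v = b (dlt 0)"
  have "mH (dlt 0) = dlt 0" unfolding mH_def using dlt_l2[of 0] by (auto simp: dlt_def fun_eq_iff)
  then have e: "v = mH v" unfolding v_def using vN_mH[OF b, of "dlt 0"] by simp
  have vl2: "v \<in> l2" unfolding v_def using bop_l2[OF vN_bop[OF b] dlt_l2] .
  have "v h = mH v h" using arg_cong[OF e, of "\<lambda>F. F h"] .
  also have "mH v h = 0" using vl2 h by (simp add: mH_def)
  finally show ?thesis unfolding v_def .
qed


lemma Hs_uminus_iff: "(- a \<in> Hs) = (a \<in> Hs)"
  using Hs_uminus[of a] Hs_uminus[of "- a"] by auto

definition cos :: "raag \<Rightarrow> raag set" where "cos h = {k. k + - h \<in> Hs}"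

definition rc :: "raag set \<Rightarrow> vec \<Rightarrow> vec" where
  "rc A f = (\<lambda>k. if k \<in> A then f k else 0)"

lemma cos_self: "h \<in> cos h" by (simp add: cos_def)

lemma cos_eq:
  assumes "k \<in> cos h" shows "cos k = cos h"
proof -
  have kh: "k + - h \<in> Hs" using assms by (simp add: cos_def)
  have "z + - k \<in> Hs \<longleftrightarrow> z + - h \<in> Hs" for z
  proof
    assume "z + - k \<in> Hs"
    then have "(z + - k) + (k + - h) \<in> Hs" using kh Hs_add by blast
    moreover have "(z + - k) + (k + - h) = z + - h" by (simp only: add.assoc minus_add_cancel)
    ultimately show "z + - h \<in> Hs" by simp
  next
    assume "z + - h \<in> Hs"
    moreover have "- (k + - h) \<in> Hs" using kh Hs_uminus by blast
    ultimately have "(z + - h) + - (k + - h) \<in> Hs" using Hs_add by blast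
    moreover have "(z + - h) + - (k + - h) = z + - k"
      by (simp only: minus_add minus_minus add.assoc minus_add_cancel)
    ultimately show "z + - k \<in> Hs" by simp
  qed
  then show ?thesis by (auto simp: cos_def)
qed

lemma cos_disj: "cos a \<noteq> cos b \<Longrightarrow> cos a \<inter> cos b = {}"
  using cos_eq by blast

lemma rc_l2: "f \<in> l2 \<Longrightarrow> rc A f \<in> l2"
  unfolding rc_def by (rule l2_restrict(1))

lemma nsq_rc: "f \<in> l2 \<Longrightarrow> nsq (rc A f) = infsum (\<lambda>g. (cmod (f g))\<^sup>2) A"
  unfolding nsq_def rc_def by (rule infsum_cong_neutral) auto

lemma nsq_disjoint_family:
  assumes f: "f \<in> l2" and fin: "finite Cs" and disj: "\<And>A B. A \<in> Cs \<Longrightarrow> B \<in> Cs \<Longrightarrow> A \<noteq> B \<Longrightarrow> A \<inter> B = {}"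
  shows "(\<Sum>A\<in>Cs. nsq (rc A f)) \<le> nsq f"
proof -
  define p where "p = (\<lambda>g. (cmod (f g))\<^sup>2)"
  have sp: "p summable_on UNIV" using f unfolding l2_def p_def by simp
  have spA: "p summable_on A" for A using summable_on_subset[OF sp] by blast
  have "(\<Sum>A\<in>Cs. nsq (rc A f)) = (\<Sum>A\<in>Cs. infsum p A)" using nsq_rc[OF f] by (simp add: p_def)
  also have "\<dots> = infsum p (\<Union>A\<in>Cs. A)"
    by (rule sum_infsum[OF fin]) (use spA disj in auto)
  also have "\<dots> \<le> infsum p UNIV"
    by (rule infsum_mono_neutral) (use spA sp in \<open>auto simp: p_def\<close>)
  also have "\<dots> = nsq f" by (simp add: nsq_def p_def)
  finally show ?thesis .
qed

lemma nsq_bound: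
  assumes "T \<in> bop" "C > 0" "\<And>f. f \<in> l2 \<Longrightarrow> l2norm (T f) \<le> C * l2norm f" "f \<in> l2"
  shows "nsq (T f) \<le> C\<^sup>2 * nsq f"
proof -
  have "(l2norm (T f))\<^sup>2 \<le> (C * l2norm f)\<^sup>2"
    by (rule power_mono[OF assms(3)[OF assms(4)] l2norm_nonneg])
  then show ?thesis by (simp add: l2norm_sq power_mult_distrib)
qed

definition Ey :: "op \<Rightarrow> op" where
  "Ey x f = (if f \<in> l2 then (\<lambda>h. x (rc (cos h) f) h) else (\<lambda>_. 0))"

lemma Ey_bound:
  assumes x: "x \<in> bop" and C: "C > 0" "\<And>f. f \<in> l2 \<Longrightarrow> l2norm (x f) \<le> C * l2norm f"
    and f: "f \<in> l2"
  shows "Ey x f \<in> l2" "nsq (Ey x f) \<le> C\<^sup>2 * nsq f"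
proof -
  have "(\<Sum>h\<in>F. (cmod (Ey x f h))\<^sup>2) \<le> C\<^sup>2 * nsq f" if F: "finite F" for F
  proof -
    have "(\<Sum>h\<in>F. (cmod (Ey x f h))\<^sup>2) = (\<Sum>A\<in>cos ` F. \<Sum>h\<in>{h\<in>F. cos h = A}. (cmod (Ey x f h))\<^sup>2)"
      by (rule sum.group[symmetric]) (use F in auto)
    also have "\<dots> = (\<Sum>A\<in>cos ` F. \<Sum>h\<in>{h\<in>F. cos h = A}. (cmod (x (rc A f) h))\<^sup>2)"
      by (intro sum.cong refl) (auto simp: Ey_def f)
    also have "\<dots> \<le> (\<Sum>A\<in>cos ` F. C\<^sup>2 * nsq (rc A f))"
    proof (rule sum_mono)
      fix A assume "A \<in> cos ` F"
      have "(\<Sum>h\<in>{h\<in>F. cos h = A}. (cmod (x (rc A f) h))\<^sup>2) \<le> nsq (x (rc A f))"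
        by (rule l2_fin_le[OF bop_l2[OF x rc_l2[OF f]]]) (use F in auto)
      also have "\<dots> \<le> C\<^sup>2 * nsq (rc A f)" by (rule nsq_bound[OF x C rc_l2[OF f]])
      finally show "(\<Sum>h\<in>{h\<in>F. cos h = A}. (cmod (x (rc A f) h))\<^sup>2) \<le> C\<^sup>2 * nsq (rc A f)" .
    qed
    also have "\<dots> = C\<^sup>2 * (\<Sum>A\<in>cos ` F. nsq (rc A f))" by (simp add: sum_distrib_left)
    also have "\<dots> \<le> C\<^sup>2 * nsq f"
      by (rule mult_left_mono[OF nsq_disjoint_family[OF f]]) (use F cos_disj in auto)
    finally show ?thesis .
  qed
  from l2_I[OF this] show "Ey x f \<in> l2" "nsq (Ey x f) \<le> C\<^sup>2 * nsq f" by auto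
qed

lemma Ey_bop:
  assumes x: "x \<in> bop"
  shows "Ey x \<in> bop"
proof -
  obtain C where C: "C > 0" "\<And>f. f \<in> l2 \<Longrightarrow> l2norm (x f) \<le> C * l2norm f"
    using bop_bound[OF x] by blast
  have a: "\<forall>f\<in>l2. Ey x f \<in> l2" using Ey_bound[OF x C] by blast
  have c: "\<exists>C. \<forall>f\<in>l2. l2norm (Ey x f) \<le> C * l2norm f"
  proof (intro exI ballI)
    fix f assume f: "f \<in> l2"
    have "nsq (Ey x f) \<le> C\<^sup>2 * nsq f" using Ey_bound[OF x C f] by blast
    then have "sqrt (nsq (Ey x f)) \<le> sqrt (C\<^sup>2 * nsq f)" by simp
    then show "l2norm (Ey x f) \<le> C * l2norm f"
      using C(1) by (simp add: l2norm_nsq real_sqrt_mult)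
  qed
  have b: "\<forall>f\<in>l2. \<forall>h\<in>l2. \<forall>c. Ey x (\<lambda>z. f z + c * h z) = (\<lambda>z. Ey x f z + c * Ey x h z)"
  proof (intro ballI allI)
    fix f h c assume f: "f \<in> l2" and h: "h \<in> l2"
    have fh: "(\<lambda>z. f z + c * h z) \<in> l2" using l2_add(1)[OF f l2_scale(1)[OF h]] .
    have "rc A (\<lambda>z. f z + c * h z) = (\<lambda>z. rc A f z + c * rc A h z)" for A
      by (auto simp: rc_def fun_eq_iff)
    then have e: "x (rc A (\<lambda>z. f z + c * h z)) = (\<lambda>z. x (rc A f) z + c * x (rc A h) z)" for A
      by (simp only: bop_lin[OF x rc_l2[OF f] rc_l2[OF h]])
    have "Ey x (\<lambda>z. f z + c * h z) = (\<lambda>y. x (rc (cos y) (\<lambda>z. f z + c * h z)) y)"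
      using fh by (simp add: Ey_def)
    also have "\<dots> = (\<lambda>y. x (rc (cos y) f) y + c * x (rc (cos y) h) y)"
      by (simp only: e)
    also have "\<dots> = (\<lambda>z. Ey x f z + c * Ey x h z)" using f h by (simp add: Ey_def)
    finally show "Ey x (\<lambda>z. f z + c * h z) = (\<lambda>z. Ey x f z + c * Ey x h z)" .
  qed
  have d: "\<forall>f. f \<notin> l2 \<longrightarrow> Ey x f = (\<lambda>_. 0)" by (simp add: Ey_def)
  show ?thesis unfolding bop_def using a b c d by blast
qed


lemma cos_0: "cos 0 = Hs" by (simp add: cos_def)

lemma Ey_dlt:
  assumes x: "x \<in> bop"
  shows "Ey x (dlt g) j = (if g \<in> cos j then x (dlt g) j else 0)"
proof -
  have "rc (cos j) (dlt g) = (if g \<in> cos j then dlt g else (\<lambda>_. 0))"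
    by (auto simp: rc_def dlt_def fun_eq_iff)
  then show ?thesis by (simp add: Ey_def bop_0[OF x])
qed

lemma Ey_dlt0:
  assumes x: "x \<in> bop"
  shows "Ey x (dlt 0) h = (if h \<in> Hs then x (dlt 0) h else 0)"
  using Ey_dlt[OF x, of 0 h] by (simp add: cos_def Hs_uminus_iff)

lemma Ey_tau:
  assumes x: "x \<in> bop" and b: "b \<in> vN_v2"
  shows "tau (Ey x \<circ> b) = tau (x \<circ> b)"
proof -
  define \<beta> where "\<beta> = b (dlt 0)"
  have bl2: "\<beta> \<in> l2" unfolding \<beta>_def using bop_l2[OF vN_bop[OF b] dlt_l2] .
  have "rc (cos 0) \<beta> = \<beta>" unfolding cos_0 rc_def \<beta>_def using vN_supp[OF b] by (auto simp: fun_eq_iff)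
  then have "Ey x \<beta> 0 = x \<beta> 0" using bl2 by (simp add: Ey_def)
  then show ?thesis by (simp add: tau_eq \<beta>_def)
qed

lemma dlt_shift: "dlt (k + g) = lambda_op k (dlt g)"
proof -
  have "(- k + h = g) = (h = k + g)" for h
  proof
    assume "- k + h = g" then have "k + (- k + h) = k + g" by simp
    then show "h = k + g" by (simp only: add_minus_cancel)
  qed simp
  then show ?thesis unfolding lambda_eq[OF dlt_l2] by (simp add: dlt_def fun_eq_iff)
qed

lemma bij_negleft: "bij (\<lambda>k::raag. - k + h)"
proof (rule bij_betw_byWitness[where f' = "\<lambda>j. h + - j"])
  show "\<forall>a\<in>UNIV. h + - (- a + h) = a" by (simp only: minus_add minus_minus add_minus_cancel ball_UNIV) simp
  show "\<forall>a\<in>UNIV. - (h + - a) + h = a" by (simp only: minus_add minus_minus add.assoc left_minus add_0_right ball_UNIV) simp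
qed auto

lemma Ey_vN:
  assumes x: "x \<in> LG"
  shows "Ey x \<in> vN_v2"
proof -
  have xb: "x \<in> bop" using LG_bop[OF x] .
  have Eb: "Ey x \<in> bop" using Ey_bop[OF xb] .
  define \<xi> where "\<xi> = x (dlt 0)"
  have comm: "Ey x (T f) = T (Ey x f)" if T: "T \<in> commutant {lambda_op gv}" and f: "f \<in> l2" for T f
  proof -
    have Tb: "T \<in> bop" using T unfolding commutant_def by blast
    have "Ey x \<circ> T = T \<circ> Ey x"
    proof (rule bop_ext[OF bop_comp[OF Eb Tb] bop_comp[OF Tb Eb]])
      fix g
      define tg where "tg = T (dlt g)"
      have tgl2: "tg \<in> l2" unfolding tg_def using bop_l2[OF Tb dlt_l2] .
      show "(Ey x \<circ> T) (dlt g) = (T \<circ> Ey x) (dlt g)"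
      proof
        fix h
        define F where "F k = (if k \<in> Hs then \<xi> k * tg (- k + h) else 0)" for k
        have h1: "((\<lambda>j. Ey x (dlt g) j * T (dlt j) h) has_sum T (Ey x (dlt g)) h) UNIV"
          by (rule bop_expand[OF Tb bop_l2[OF Eb dlt_l2]])
        have h2: "((\<lambda>j. rc (cos h) tg j * x (dlt j) h) has_sum x (rc (cos h) tg) h) UNIV"
          by (rule bop_expand[OF xb rc_l2[OF tgl2]])
        have r1: "Ey x (dlt g) (k + g) * T (dlt (k + g)) h = F k" for k
        proof -
          have e1: "g + - (k + g) = - k" by (simp only: minus_add add_minus_cancel)
          have e2: "(k + g) + - g = k" by (simp only: add.assoc add_0_right right_minus)
          have "Ey x (dlt g) (k + g) = (if k \<in> Hs then \<xi> k else 0)"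
            unfolding Ey_dlt[OF xb] cos_def LG_dlt[OF x, of g] \<xi>_def using e1 e2 Hs_uminus_iff
            by simp
          moreover have "T (dlt (k + g)) h = tg (- k + h)" if kH: "k \<in> Hs"
          proof -
            obtain n where n: "k = zp n" using kH unfolding Hs_def by blast
            have "T (dlt (k + g)) = lambda_op k (T (dlt g))"
              unfolding dlt_shift n by (rule comm_v2_H[OF T dlt_l2])
            then show ?thesis using tgl2 unfolding tg_def by (simp add: lambda_eq)
          qed
          ultimately show ?thesis unfolding F_def by simp
        qed
        have r2: "rc (cos h) tg (- k + h) * x (dlt (- k + h)) h = F k" for k
        proof -
          have e1: "(- k + h) + - h = - k" by (simp only: add.assoc add_0_right right_minus)
          have e2: "h + - (- k + h) = k" by (simp only: minus_add minus_minus add_minus_cancel)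
          have "x (dlt (- k + h)) h = \<xi> k" unfolding LG_dlt[OF x, of "- k + h"] \<xi>_def e2 ..
          moreover have "rc (cos h) tg (- k + h) = (if k \<in> Hs then tg (- k + h) else 0)"
            unfolding rc_def cos_def using e1 Hs_uminus_iff by simp
          ultimately show ?thesis unfolding F_def by simp
        qed
        have "(F has_sum T (Ey x (dlt g)) h) UNIV"
          using has_sum_reindex_bij_betw[OF bij_right[of g], of "\<lambda>j. Ey x (dlt g) j * T (dlt j) h"] h1
          unfolding r1 by simp
        moreover have "(F has_sum x (rc (cos h) tg) h) UNIV"
          using has_sum_reindex_bij_betw[OF bij_negleft[of h], of "\<lambda>j. rc (cos h) tg j * x (dlt j) h"] h2
          unfolding r2 by simp
        ultimately have "T (Ey x (dlt g)) h = x (rc (cos h) tg) h" by (rule has_sum_unique)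
        moreover have "Ey x tg h = x (rc (cos h) tg) h" using tgl2 by (simp add: Ey_def)
        ultimately show "(Ey x \<circ> T) (dlt g) h = (T \<circ> Ey x) (dlt g) h" by (simp add: tg_def)
      qed
    qed
    from fun_cong[OF this, of f] show ?thesis by simp
  qed
  have "\<forall>T\<in>commutant {lambda_op gv}. \<forall>f\<in>l2. Ey x (T f) = T (Ey x f)"
    using comm by blast
  then show ?thesis unfolding vN_v2_def gv_def[symmetric] commutant_def[of "commutant {lambda_op gv}"]
    using Eb by blast
qed


lemma tau_vN_lam:
  assumes y: "y \<in> vN_v2"
  shows "tau (y \<circ> lambda_op (zp n)) = y (dlt 0) (zp (- n))"
proof -
  have "tau (y \<circ> lambda_op (zp n)) = y (lambda_op (zp n) (dlt 0)) 0" by (simp add: tau_eq)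
  also have "\<dots> = y (dlt (zp n)) 0" by (simp only: dlt_lam[of "zp n", symmetric])
  also have "\<dots> = y (dlt 0) (0 + - zp n)" by (rule vN_dlt[OF y])
  finally show ?thesis by (simp add: zp_uminus)
qed

lemma vN_unique:
  assumes y1: "y1 \<in> vN_v2" and y2: "y2 \<in> vN_v2"
    and eq: "\<And>b. b \<in> vN_v2 \<Longrightarrow> tau (y1 \<circ> b) = tau (y2 \<circ> b)"
  shows "y1 = y2"
proof -
  have d0: "y1 (dlt 0) = y2 (dlt 0)"
  proof
    fix h
    show "y1 (dlt 0) h = y2 (dlt 0) h"
    proof (cases "h \<in> Hs")
      case True
      then obtain m where m: "h = zp m" unfolding Hs_def by blast
      have "tau (y1 \<circ> lambda_op (zp (- m))) = tau (y2 \<circ> lambda_op (zp (- m)))"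
        by (rule eq[OF lam_H_vN])
      then show ?thesis unfolding tau_vN_lam[OF y1] tau_vN_lam[OF y2] m by simp
    next
      case False
      then show ?thesis using vN_supp[OF y1] vN_supp[OF y2] by simp
    qed
  qed
  show ?thesis
  proof (rule bop_ext[OF vN_bop[OF y1] vN_bop[OF y2]])
    fix j
    show "y1 (dlt j) = y2 (dlt j)"
    proof
      fix h show "y1 (dlt j) h = y2 (dlt j) h"
        unfolding vN_dlt[OF y1, of j] vN_dlt[OF y2, of j] d0 ..
    qed
  qed
qed

lemma condexp_eq:
  assumes x: "x \<in> LG"
  shows "condexp vN_v2 x = Ey x"
  unfolding condexp_def
proof (rule the_equality)
  show "Ey x \<in> vN_v2 \<and> (\<forall>b\<in>vN_v2. tau (Ey x \<circ> b) = tau (x \<circ> b))"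
    using Ey_vN[OF x] Ey_tau[OF LG_bop[OF x]] by blast
  fix y assume y: "y \<in> vN_v2 \<and> (\<forall>b\<in>vN_v2. tau (y \<circ> b) = tau (x \<circ> b))"
  show "y = Ey x"
    by (rule vN_unique) (use y Ey_vN[OF x] Ey_tau[OF LG_bop[OF x]] in auto)
qed

lemma condexp_dlt0:
  assumes x: "x \<in> LG"
  shows "condexp vN_v2 x delta_e h = (if h \<in> Hs then x delta_e h else 0)"
  unfolding condexp_eq[OF x] delta_e_dlt by (rule Ey_dlt0[OF LG_bop[OF x]])


lemma nsq_disjoint_indexed:
  assumes f: "f \<in> l2" and fin: "finite I" and disj: "\<And>i j. i \<in> I \<Longrightarrow> j \<in> I \<Longrightarrow> i \<noteq> j \<Longrightarrow> A i \<inter> A j = {}"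
  shows "(\<Sum>i\<in>I. nsq (rc (A i) f)) \<le> nsq f"
proof -
  define p where "p = (\<lambda>g. (cmod (f g))\<^sup>2)"
  have sp: "p summable_on UNIV" using f unfolding l2_def p_def by simp
  have spA: "p summable_on A" for A using summable_on_subset[OF sp] by blast
  have "(\<Sum>i\<in>I. nsq (rc (A i) f)) = (\<Sum>i\<in>I. infsum p (A i))" using nsq_rc[OF f] by (simp add: p_def)
  also have "\<dots> = infsum p (\<Union>i\<in>I. A i)"
    by (rule sum_infsum[OF fin]) (use spA disj in auto)
  also have "\<dots> \<le> infsum p UNIV"
    by (rule infsum_mono_neutral) (use spA sp in \<open>auto simp: p_def\<close>)
  also have "\<dots> = nsq f" by (simp add: nsq_def p_def)
  finally show ?thesis .
qed

lemma bij_cjpow: "bij (cj ^^ m)"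
  using bij_betw_funpow[OF cj_bij] .

lemma l2_comp: "bij p \<Longrightarrow> f \<in> l2 \<Longrightarrow> (\<lambda>k. f (p k)) \<in> l2"
  using l2_reindex(1)[of p f] by (simp add: comp_def)

lemma l2norm_comp: "bij p \<Longrightarrow> l2norm (\<lambda>k. f (p k)) = l2norm f"
  using l2_reindex(3)[of p f] by (simp add: comp_def)

lemma nsq_comp: "bij p \<Longrightarrow> nsq (\<lambda>k. f (p k)) = nsq f"
  using l2_reindex(2)[of p f] by (simp add: comp_def)

lemma drift:
  assumes xi: "\<xi> \<in> l2"
  shows "l2norm (\<lambda>k. \<xi> ((cj ^^ m) k) - \<xi> k) \<le> real m * l2norm (\<lambda>k. \<xi> (cj k) - \<xi> k)"
proof (induction m)
  case 0 then show ?case by simp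
next
  case (Suc m)
  define p where "p = cj ^^ m"
  have bp: "bij p" unfolding p_def by (rule bij_cjpow)
  have d1l2: "(\<lambda>k. \<xi> (cj k) - \<xi> k) \<in> l2" using l2_diff(1)[OF l2_comp[OF cj_bij xi] xi] .
  have A: "(\<lambda>j. \<xi> (cj j) - \<xi> j) \<circ> p \<in> l2" using l2_reindex(1)[OF bp] d1l2 by simp
  have Bl: "(\<lambda>k. \<xi> (p k) - \<xi> k) \<in> l2" using l2_diff(1)[OF l2_comp[OF bp xi] xi] .
  have "(\<lambda>k. \<xi> ((cj ^^ Suc m) k) - \<xi> k) = (\<lambda>k. ((\<lambda>j. \<xi> (cj j) - \<xi> j) \<circ> p) k + (\<xi> (p k) - \<xi> k))"
    by (simp add: p_def)
  then have "l2norm (\<lambda>k. \<xi> ((cj ^^ Suc m) k) - \<xi> k)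
      \<le> l2norm ((\<lambda>j. \<xi> (cj j) - \<xi> j) \<circ> p) + l2norm (\<lambda>k. \<xi> (p k) - \<xi> k)"
    using l2_add(2)[OF A Bl] by simp
  also have "\<dots> = l2norm (\<lambda>k. \<xi> (cj k) - \<xi> k) + l2norm (\<lambda>k. \<xi> (p k) - \<xi> k)"
    using l2_reindex(3)[OF bp] by simp
  also have "\<dots> \<le> l2norm (\<lambda>k. \<xi> (cj k) - \<xi> k) + real m * l2norm (\<lambda>k. \<xi> (cj k) - \<xi> k)"
    using Suc by (simp add: p_def)
  finally show ?case by (simp add: algebra_simps)
qed

definition Sx :: "raag set" where "Sx = Hs - {0}"

lemma Sx_zp: "g \<in> Sx \<Longrightarrow> \<exists>n. n \<noteq> 0 \<and> g = zp n"
  unfolding Sx_def Hs_def by auto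

lemma Sx_disj:
  assumes "m \<noteq> m'" shows "(cj ^^ m) ` Sx \<inter> (cj ^^ m') ` Sx = {}"
proof -
  have "(cj ^^ a) (zp n) \<noteq> (cj ^^ b) (zp n')" if "a < b" "n \<noteq> 0" "n' \<noteq> 0" for a b n n'
    using cj_disjoint that by blast
  then show ?thesis using assms Sx_zp
    by (auto simp: neq_iff) (metis neq_iff)+
qed

lemma rc_comp:
  assumes "inj p"
  shows "rc S (\<lambda>k. f (p k)) = (\<lambda>k. rc (p ` S) f (p k))"
  using assms by (auto simp: rc_def fun_eq_iff inj_image_mem_iff)

lemma key:
  assumes xi: "\<xi> \<in> l2" and B: "l2norm \<xi> \<le> B" and N: "N > 0"
  defines "e \<equiv> l2norm (\<lambda>k. \<xi> (cj k) - \<xi> k)"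
  shows "l2norm (rc Sx \<xi>) \<le> max (2 * B / sqrt (real N)) (2 * real N * e)"
proof (rule ccontr)
  define t where "t = l2norm (rc Sx \<xi>)"
  assume "\<not> ?thesis"
  then have t1: "t > 2 * B / sqrt (real N)" and t2: "t > 2 * real N * e" unfolding t_def by auto
  have e0: "e \<ge> 0" unfolding e_def by (rule l2norm_nonneg)
  have t0: "t > 0" using t2 e0 N by (smt (verit) mult_nonneg_nonneg of_nat_0_le_iff)
  have tm: "l2norm (rc ((cj ^^ m) ` Sx) \<xi>) > t / 2" if "m < N" for m
  proof -
    define p where "p = cj ^^ m"
    have bp: "bij p" unfolding p_def by (rule bij_cjpow)
    have xp: "(\<lambda>k. \<xi> (p k)) \<in> l2" by (rule l2_comp[OF bp xi])
    have "rc Sx \<xi> = (\<lambda>k. rc Sx (\<lambda>k. \<xi> (p k)) k + rc Sx (\<lambda>k. \<xi> k - \<xi> (p k)) k)"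
      by (auto simp: rc_def fun_eq_iff)
    then have "t \<le> l2norm (rc Sx (\<lambda>k. \<xi> (p k))) + l2norm (rc Sx (\<lambda>k. \<xi> k - \<xi> (p k)))"
      unfolding t_def using l2_add(2)[OF rc_l2[OF xp] rc_l2[OF l2_diff(1)[OF xi xp]], of Sx Sx] by simp
    also have "l2norm (rc Sx (\<lambda>k. \<xi> k - \<xi> (p k))) \<le> l2norm (\<lambda>k. \<xi> k - \<xi> (p k))"
      unfolding rc_def by (rule l2_restrict(2)[OF l2_diff(1)[OF xi xp]])
    also have "l2norm (\<lambda>k. \<xi> k - \<xi> (p k)) = l2norm (\<lambda>k. \<xi> (p k) - \<xi> k)"
      using l2norm_uminus[of "\<lambda>k. \<xi> (p k) - \<xi> k"] by simp
    also have "\<dots> \<le> real m * e" unfolding p_def e_def by (rule drift[OF xi])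
    also have "real m * e \<le> real N * e" using that e0 by (simp add: mult_right_mono)
    finally have "t \<le> l2norm (rc Sx (\<lambda>k. \<xi> (p k))) + real N * e" by simp
    moreover have "l2norm (rc Sx (\<lambda>k. \<xi> (p k))) = l2norm (rc (p ` Sx) \<xi>)"
      unfolding rc_comp[OF bij_is_inj[OF bp]] by (rule l2norm_comp[OF bp])
    then have "l2norm (rc Sx (\<lambda>k. \<xi> (p k))) = l2norm (rc ((cj ^^ m) ` Sx) \<xi>)"
      by (simp add: p_def)
    ultimately show ?thesis using t2 by simp
  qed
  have "(\<Sum>m<N. nsq (rc ((cj ^^ m) ` Sx) \<xi>)) \<le> nsq \<xi>"
    by (rule nsq_disjoint_indexed[OF xi]) (use Sx_disj in auto)
  moreover have "(\<Sum>m<N. nsq (rc ((cj ^^ m) ` Sx) \<xi>)) > (\<Sum>m<N. (t / 2)\<^sup>2)"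
  proof (rule sum_strict_mono)
    show "finite {..<N}" "{..<N} \<noteq> {}" using N by auto
    fix m assume "m \<in> {..<N}"
    then have "t / 2 < l2norm (rc ((cj ^^ m) ` Sx) \<xi>)" using tm by simp
    then have "(t / 2)\<^sup>2 < (l2norm (rc ((cj ^^ m) ` Sx) \<xi>))\<^sup>2"
      using t0 by (intro power_strict_mono) auto
    then show "(t / 2)\<^sup>2 < nsq (rc ((cj ^^ m) ` Sx) \<xi>)" by (simp add: l2norm_sq)
  qed
  moreover have "nsq \<xi> \<le> B\<^sup>2"
  proof -
    have "(l2norm \<xi>)\<^sup>2 \<le> B\<^sup>2" by (rule power_mono[OF B l2norm_nonneg])
    then show ?thesis by (simp add: l2norm_sq)
  qed
  ultimately have "real N * (t / 2)\<^sup>2 < B\<^sup>2" by simp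
  then have "real N * t\<^sup>2 < 4 * B\<^sup>2" by (simp add: power_divide)
  moreover have "2 * B < t * sqrt (real N)" using t1 N by (simp add: divide_less_eq)
  moreover have "B \<ge> 0" using B l2norm_nonneg[of \<xi>] by linarith
  ultimately have "(2 * B)\<^sup>2 < (t * sqrt (real N))\<^sup>2"
    by (intro power_strict_mono) auto
  also have "(t * sqrt (real N))\<^sup>2 = real N * t\<^sup>2" by (simp add: power_mult_distrib)
  finally show False using \<open>real N * t\<^sup>2 < 4 * B\<^sup>2\<close> by (simp add: power_mult_distrib)
qed


lemma rc_Hs_split:
  assumes xi: "\<xi> \<in> l2"
  shows "l2norm (rc Hs \<xi>) \<le> cmod (\<xi> 0) + l2norm (rc Sx \<xi>)"
proof -
  have "rc Hs \<xi> = (\<lambda>g. rc {0} \<xi> g + rc Sx \<xi> g)"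
    by (auto simp: rc_def Sx_def fun_eq_iff)
  then have "l2norm (rc Hs \<xi>) \<le> l2norm (rc {0} \<xi>) + l2norm (rc Sx \<xi>)"
    using l2_add(2)[OF rc_l2[OF xi] rc_l2[OF xi], of "{0}" Sx] by simp
  moreover have "l2norm (rc {0} \<xi>) \<le> cmod (\<xi> 0) * l2norm (dlt 0)"
    by (rule l2_dom(2)[OF dlt_l2]) (auto simp: rc_def dlt_def)
  ultimately show ?thesis by simp
qed

lemma key2:
  assumes xi: "\<xi> \<in> l2" and B: "l2norm \<xi> \<le> B" and N: "N > 0"
  shows "l2norm (rc Hs \<xi>) \<le> cmod (\<xi> 0) + max (2 * B / sqrt (real N)) (2 * real N * l2norm (\<lambda>k. \<xi> (cj k) - \<xi> k))"
  using rc_Hs_split[OF xi] key[OF xi B N] by linarith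

lemma limit_lemma:
  fixes X a e :: "nat \<Rightarrow> real" and F :: "nat filter"
  assumes bound: "\<And>n N. N > 0 \<Longrightarrow> X n \<le> a n + max (2 * B / sqrt (real N)) (2 * real N * e n)"
    and X0: "\<And>n. X n \<ge> 0" and B0: "B \<ge> 0"
    and a: "(a \<longlongrightarrow> 0) F" and e: "(e \<longlongrightarrow> 0) F"
  shows "(X \<longlongrightarrow> 0) F"
proof (rule tendstoI)
  fix \<eta> :: real assume \<eta>: "\<eta> > 0"
  define N where "N = nat \<lceil>(6 * B / \<eta>)\<^sup>2\<rceil> + 1"
  have N0: "N > 0" unfolding N_def by simp
  have "real N > (6 * B / \<eta>)\<^sup>2" unfolding N_def by linarith
  then have "sqrt (real N) > sqrt ((6 * B / \<eta>)\<^sup>2)" by (simp only: real_sqrt_less_iff)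
  then have sN: "sqrt (real N) > 6 * B / \<eta>" using B0 \<eta> by simp
  have sN0: "sqrt (real N) > 0" using N0 by simp
  have c1: "2 * B / sqrt (real N) < \<eta> / 3"
  proof -
    have "6 * B < \<eta> * sqrt (real N)" using sN \<eta> by (simp add: divide_less_eq mult.commute)
    then show ?thesis using sN0 by (simp add: divide_less_eq)
  qed
  have ev1: "eventually (\<lambda>n. dist (a n) 0 < \<eta> / 3) F" using tendstoD[OF a, of "\<eta> / 3"] \<eta> by simp
  have ev2: "eventually (\<lambda>n. dist (e n) 0 < \<eta> / (6 * real N)) F" using tendstoD[OF e, of "\<eta> / (6 * real N)"] \<eta> N0 by simp
  show "eventually (\<lambda>n. dist (X n) 0 < \<eta>) F"
    using ev1 ev2
  proof eventually_elim
    case (elim n)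
    have an: "a n < \<eta> / 3" using elim(1) by (simp add: dist_real_def)
    have "e n < \<eta> / (6 * real N)" using elim(2) by (simp add: dist_real_def)
    then have "2 * real N * e n < \<eta> / 3" using N0 by (simp add: less_divide_eq mult.commute mult.left_commute)
    then have "X n < \<eta> / 3 + \<eta> / 3" using bound[OF N0, of n] an c1 by linarith
    then show ?case using X0[of n] \<eta> by (simp add: dist_real_def)
  qed
qed

theorem lemma6p10:
  fixes U :: "nat filter" and W :: "nat \<Rightarrow> op"
  assumes "free_ultrafilter U"
    and "haar_unitary_U U W"
    and "ueq U (\<lambda>n. lambda_op (rgen U1) \<circ> W n) (\<lambda>n. W n \<circ> lambda_op (rgen U1))"
  shows "ueq U (\<lambda>n. condexp vN_v2 (W n)) (\<lambda>n. zero_op)"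
proof -
  have WLG: "\<And>n. W n \<in> LG" and "\<exists>C. \<forall>n. \<forall>f\<in>l2. l2norm (W n f) \<le> C * l2norm f"
    using assms(2) unfolding haar_unitary_U_def in_ultrapower_def by auto
  then obtain C where C: "\<And>n f. f \<in> l2 \<Longrightarrow> l2norm (W n f) \<le> C * l2norm f" by blast
  have "((\<lambda>n. tau (W n ^^ 1)) \<longlongrightarrow> 0) U"
    using assms(2) unfolding haar_unitary_U_def by blast
  then have tau1: "((\<lambda>n. tau (W n)) \<longlongrightarrow> 0) U" by (simp add: One_nat_def)
  define \<xi> where "\<xi> n = W n (dlt 0)" for n
  have xil2: "\<xi> n \<in> l2" for n unfolding \<xi>_def by (rule bop_l2[OF LG_bop[OF WLG] dlt_l2])
  have xiB: "l2norm (\<xi> n) \<le> \<bar>C\<bar>" for n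
    using C[of "dlt 0" n] unfolding \<xi>_def by simp
  define a where "a n = cmod (\<xi> n 0)" for n
  have a0: "(a \<longlongrightarrow> 0) U"
  proof -
    have "((\<lambda>n. \<xi> n 0) \<longlongrightarrow> 0) U" using tau1 by (simp add: tau_eq \<xi>_def)
    then show ?thesis unfolding a_def by (rule tendsto_norm_zero)
  qed
  define e where "e n = l2norm (\<lambda>k. \<xi> n (cj k) - \<xi> n k)" for n
  have e_eq: "l2norm (\<lambda>g. (lambda_op (rgen U1) \<circ> W n) delta_e g - (W n \<circ> lambda_op (rgen U1)) delta_e g) = e n" for n
  proof -
    have l1: "(lambda_op (rgen U1) \<circ> W n) delta_e = (\<lambda>h. \<xi> n (- gu + h))"
      unfolding comp_def delta_e_dlt gu_def[symmetric] \<xi>_def by (rule lambda_eq[OF xil2[unfolded \<xi>_def]])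
    have l2: "(W n \<circ> lambda_op (rgen U1)) delta_e = (\<lambda>h. \<xi> n (h + - gu))"
      unfolding comp_def delta_e_dlt gu_def[symmetric] \<xi>_def dlt_lam[of gu, symmetric]
      by (rule ext, rule LG_dlt[OF WLG])
    have "l2norm (\<lambda>h. \<xi> n (- gu + h) - \<xi> n (h + - gu))
        = l2norm (\<lambda>k. \<xi> n (- gu + (gu + k)) - \<xi> n ((gu + k) + - gu))"
      using l2norm_comp[OF bij_left[of gu], of "\<lambda>h. \<xi> n (- gu + h) - \<xi> n (h + - gu)"] by simp
    also have "\<dots> = l2norm (\<lambda>k. - (\<xi> n (cj k) - \<xi> n k))"
      by (simp only: minus_add_cancel cj_def minus_diff_eq)
    also have "\<dots> = e n" unfolding e_def by (rule l2norm_uminus)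
    finally show ?thesis unfolding l1 l2 .
  qed
  have e0: "(e \<longlongrightarrow> 0) U"
    using assms(3) unfolding ueq_def e_eq .
  have goal_eq: "l2norm (\<lambda>g. condexp vN_v2 (W n) delta_e g - zero_op delta_e g) = l2norm (rc Hs (\<xi> n))" for n
  proof -
    have "(\<lambda>g. condexp vN_v2 (W n) delta_e g - zero_op delta_e g) = (\<lambda>g. if g \<in> Hs then W n delta_e g else 0)"
      by (simp add: condexp_dlt0[OF WLG] zero_op_def)
    also have "\<dots> = rc Hs (\<xi> n)" unfolding rc_def \<xi>_def delta_e_dlt ..
    finally have "(\<lambda>g. condexp vN_v2 (W n) delta_e g - zero_op delta_e g) = rc Hs (\<xi> n)" .
    then show ?thesis by simp
  qed
  have "((\<lambda>n. l2norm (rc Hs (\<xi> n))) \<longlongrightarrow> 0) U"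
  proof (rule limit_lemma[where B = "\<bar>C\<bar>"])
    fix n N :: nat assume "N > 0"
    then show "l2norm (rc Hs (\<xi> n)) \<le> a n + max (2 * \<bar>C\<bar> / sqrt (real N)) (2 * real N * e n)"
      unfolding a_def e_def by (rule key2[OF xil2 xiB])
  qed (use a0 e0 l2norm_nonneg in auto)
  then show ?thesis unfolding ueq_def goal_eq .
qed


end
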